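(* Let $G$ be a graph with $n$ vertices and $m$ edges, and let $r$ be an integer with $3\leq r\leq n/2$. If $G$ contains no cycle of length $r$, then \[ \mu_n(G)\leq -\frac{4m^2}{n^3}+2(r-3). \]
   Context: All graphs are finite, simple and undirected. $\mu_n(G)$ denotes the smallest eigenvalue of the adjacency matrix of $G$. *)

theory Defs
  imports "Jordan_Normal_Form.Char_Poly"
begin

definition simple_graph :: "nat \<Rightarrow> (nat \<Rightarrow> nat \<Rightarrow> bool) \<Rightarrow> bool" where
  "simple_graph n E \<longleftrightarrow> (\<forall>i<n. \<forall>j<n. E i j \<longrightarrow> E j i) \<and> (\<forall>i<n. \<not> E i i)"

definition edges :: "nat \<Rightarrow> (nat \<Rightarrow> nat \<Rightarrow> bool) \<Rightarrow> nat set set" where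
  "edges n E = {{i, j} | i j. i < n \<and> j < n \<and> E i j}"

definition num_edges :: "nat \<Rightarrow> (nat \<Rightarrow> nat \<Rightarrow> bool) \<Rightarrow> nat" where
  "num_edges n E = card (edges n E)"

definition adj_matrix :: "nat \<Rightarrow> (nat \<Rightarrow> nat \<Rightarrow> bool) \<Rightarrow> real mat" where
  "adj_matrix n E = mat n n (\<lambda>(i, j). if E i j then 1 else 0)"

definition smallest_eigenvalue :: "real mat \<Rightarrow> real" where
  "smallest_eigenvalue A = Min {k. eigenvalue A k}"

definition has_cycle :: "nat \<Rightarrow> (nat \<Rightarrow> nat \<Rightarrow> bool) \<Rightarrow> nat \<Rightarrow> bool" where
  "has_cycle n E r \<longleftrightarrow> r \<ge> 3 \<and> (\<exists>v :: nat \<Rightarrow> nat.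
      inj_on v {0..<r} \<and> (\<forall>i<r. v i < n) \<and> (\<forall>i<r. E (v i) (v ((i + 1) mod r))))"

end

theory Submission
  imports Defs "HOL-Analysis.Function_Topology"
begin

definition bf :: "nat \<Rightarrow> (nat \<Rightarrow> nat \<Rightarrow> real) \<Rightarrow> (nat \<Rightarrow> real) \<Rightarrow> (nat \<Rightarrow> real) \<Rightarrow> real" where
  "bf n a x y = (\<Sum>i<n. \<Sum>j<n. a i j * x i * y j)"

definition nsq :: "nat \<Rightarrow> (nat \<Rightarrow> real) \<Rightarrow> real" where
  "nsq n x = (\<Sum>i<n. (x i)^2)"

lemma coord_cont[continuous_intros]: "continuous_on S (\<lambda>x::nat\<Rightarrow>real. x i)"
  by (rule continuous_on_subset[OF continuous_on_product_coordinates]) simp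

lemma sphere_compact: "compact {x::nat\<Rightarrow>real. (\<forall>i\<ge>n. x i = 0) \<and> nsq n x = 1}"
proof -
  define B where "B = (\<lambda>i::nat. if i < n then {-1..1::real} else {0})"
  have c1: "compact (PiE UNIV B)"
  proof -
    have "compactin (product_topology (\<lambda>_. euclidean) UNIV) (PiE UNIV B)"
      unfolding compactin_PiE by (auto simp: B_def)
    then show ?thesis by (simp add: euclidean_product_topology)
  qed
  have sub: "{x::nat\<Rightarrow>real. (\<forall>i\<ge>n. x i = 0) \<and> nsq n x = 1} \<subseteq> PiE UNIV B"
  proof
    fix x :: "nat \<Rightarrow> real" assume x: "x \<in> {x. (\<forall>i\<ge>n. x i = 0) \<and> nsq n x = 1}"
    have "\<bar>x i\<bar> \<le> 1" if "i < n" for i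
    proof -
      have "(x i)^2 \<le> nsq n x" unfolding nsq_def
        by (rule member_le_sum) (use that in auto)
      then have "(x i)^2 \<le> 1^2" using x by simp
      then show ?thesis using abs_le_square_iff[of "x i" 1] by simp
    qed
    then show "x \<in> PiE UNIV B" using x by (auto simp: B_def PiE_def Pi_def extensional_def abs_le_iff)
  qed
  have cl: "closed {x::nat\<Rightarrow>real. (\<forall>i\<ge>n. x i = 0) \<and> nsq n x = 1}"
    unfolding nsq_def
    by (intro closed_Collect_conj closed_Collect_all closed_Collect_imp closed_Collect_eq continuous_intros) auto
  have "{x::nat\<Rightarrow>real. (\<forall>i\<ge>n. x i = 0) \<and> nsq n x = 1} = PiE UNIV B \<inter> {x::nat\<Rightarrow>real. (\<forall>i\<ge>n. x i = 0) \<and> nsq n x = 1}"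
    using sub by blast
  then show ?thesis using compact_Int_closed[OF c1 cl] by simp
qed

lemma bf_expand:
  "bf n a (\<lambda>i. x i + t * y i) (\<lambda>i. x i + t * y i) = bf n a x x + t * bf n a x y + t * bf n a y x + t^2 * bf n a y y"
  unfolding bf_def
  by (simp add: algebra_simps sum.distrib sum_distrib_left power2_eq_square)

lemma nsq_expand:
  "nsq n (\<lambda>i. x i + t * y i) = nsq n x + 2 * t * (\<Sum>i<n. x i * y i) + t^2 * nsq n y"
  unfolding nsq_def
  by (simp add: algebra_simps sum.distrib sum_distrib_left power2_eq_square)

lemma bf_alt: "bf n a x y = (\<Sum>j<n. y j * (\<Sum>i<n. a i j * x i))"
  unfolding bf_def by (subst sum.swap) (simp add: sum_distrib_left algebra_simps)

lemma bf_alt2: "bf n a x y = (\<Sum>i<n. x i * (\<Sum>j<n. a i j * y j))"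
  unfolding bf_def by (simp add: sum_distrib_left algebra_simps)

lemma bf_sym:
  assumes "\<forall>i<n. \<forall>j<n. a i j = a j i"
  shows "bf n a x y = bf n a y x"
  unfolding bf_def
  by (subst sum.swap) (rule sum.cong[OF refl], rule sum.cong[OF refl], use assms in auto)

lemma bf_scale: "bf n a (\<lambda>i. c * x i) (\<lambda>i. c * x i) = c^2 * bf n a x x"
  unfolding bf_def by (simp add: sum_distrib_left algebra_simps power2_eq_square)

lemma nsq_scale: "nsq n (\<lambda>i. c * x i) = c^2 * nsq n x"
  unfolding nsq_def by (simp add: sum_distrib_left algebra_simps power2_eq_square)

lemma bf_cong: "(\<And>i. i < n \<Longrightarrow> x i = x' i) \<Longrightarrow> (\<And>i. i < n \<Longrightarrow> y i = y' i) \<Longrightarrow> bf n a x y = bf n a x' y'"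
  unfolding bf_def by (intro sum.cong refl) auto

lemma nsq_cong: "(\<And>i. i < n \<Longrightarrow> x i = x' i) \<Longrightarrow> nsq n x = nsq n x'"
  unfolding nsq_def by (intro sum.cong refl) auto

lemma nsq_nonneg: "nsq n x \<ge> 0"
  unfolding nsq_def by (intro sum_nonneg) auto

lemma nsq_zero: "nsq n x = 0 \<Longrightarrow> i < n \<Longrightarrow> x i = 0"
  unfolding nsq_def by (subst (asm) sum_nonneg_eq_0_iff) auto

lemma quad_zero:
  fixes s c :: real
  assumes "\<forall>t. 0 \<le> 2 * t * s + t^2 * c" "s \<ge> 0"
  shows "s = 0"
proof (rule ccontr)
  assume "s \<noteq> 0" then have sp: "s > 0" using assms(2) by simp
  define d where "d = \<bar>c\<bar> + 1"
  have dp: "d > 0" and cd: "c \<le> d" unfolding d_def by auto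
  define t where "t = - s / d"
  have "2 * t * s + t^2 * c = - 2 * s^2 / d + s^2 * c / d^2"
    unfolding t_def by (simp add: power2_eq_square field_simps)
  also have "s^2 * c / d^2 \<le> s^2 * d / d^2"
    using cd dp by (intro divide_right_mono mult_left_mono) auto
  also have "s^2 * d / d^2 = s^2 / d" using dp by (simp add: power2_eq_square)
  finally have "2 * t * s + t^2 * c \<le> - (s^2 / d)" by simp
  moreover have "s^2 / d > 0" using sp dp by simp
  ultimately show False using assms(1) by (metis neg_less_0_iff_less not_le order_le_less_trans)
qed

lemma rayleigh_min:
  assumes sym: "\<forall>i<n. \<forall>j<n. a i j = a j i" and n: "n > 0"
  shows "\<exists>v lam. nsq n v = 1 \<and> (\<forall>i<n. (\<Sum>j<n. a i j * v j) = lam * v i)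
           \<and> (\<forall>x. bf n a x x \<ge> lam * nsq n x)"
proof -
  define K where "K = {x::nat\<Rightarrow>real. (\<forall>i\<ge>n. x i = 0) \<and> nsq n x = 1}"
  have cK: "compact K" unfolding K_def by (rule sphere_compact)
  define e0 :: "nat \<Rightarrow> real" where "e0 = (\<lambda>i. if i = 0 then 1 else 0)"
  have "nsq n e0 = sum e0 {..<n}" unfolding nsq_def by (rule sum.cong) (auto simp: e0_def)
  also have "\<dots> = 1" unfolding e0_def using n by (simp add: sum.delta)
  finally have "nsq n e0 = 1" .
  then have "e0 \<in> K" unfolding K_def e0_def using n by auto
  then have ne: "K \<noteq> {}" by auto
  have cont: "continuous_on K (\<lambda>x. bf n a x x)"
    unfolding bf_def by (intro continuous_intros)
  obtain v where vK: "v \<in> K" and vmin: "\<forall>y\<in>K. bf n a v v \<le> bf n a y y"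
    using continuous_attains_inf[OF cK ne cont] by blast
  define lam where "lam = bf n a v v"
  have nv: "nsq n v = 1" using vK unfolding K_def by auto
  have ray: "bf n a x x \<ge> lam * nsq n x" for x
  proof (cases "nsq n x = 0")
    case True
    then have "bf n a x x = bf n a (\<lambda>_. 0) (\<lambda>_. 0)"
      by (intro bf_cong) (auto dest: nsq_zero)
    then show ?thesis using True by (simp add: bf_def)
  next
    case False
    then have np: "nsq n x > 0" using nsq_nonneg[of n x] by simp
    define s where "s = sqrt (nsq n x)"
    have sp: "s > 0" unfolding s_def using np by simp
    have s2: "s^2 = nsq n x" unfolding s_def using np by simp
    define y where "y = (\<lambda>i. (1/s) * (if i < n then x i else 0))"
    have "nsq n y = (1/s)^2 * nsq n x"
      unfolding y_def nsq_scale by (simp add: nsq_cong[of n "\<lambda>i. if i < n then x i else 0" x])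
    also have "\<dots> = 1" using s2 sp np by (simp add: power_divide)
    finally have "y \<in> K" unfolding K_def y_def by auto
    then have "lam \<le> bf n a y y" using vmin unfolding lam_def by auto
    also have "bf n a y y = (1/s)^2 * bf n a x x"
      unfolding y_def bf_scale by (simp add: bf_cong[of n "\<lambda>i. if i < n then x i else 0" x])
    finally have "lam \<le> bf n a x x / nsq n x" using s2 by (simp add: power_divide)
    then show ?thesis using np by (simp add: field_simps)
  qed
  define w where "w = (\<lambda>i. (\<Sum>j<n. a i j * v j) - lam * v i)"
  have key: "bf n a v w - lam * (\<Sum>i<n. v i * w i) = nsq n w"
  proof -
    have "bf n a v w = (\<Sum>j<n. w j * (\<Sum>i<n. a j i * v i))"
      unfolding bf_alt using sym by (intro sum.cong refl) (auto intro!: sum.cong)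
    then have "bf n a v w - lam * (\<Sum>i<n. v i * w i) = (\<Sum>j<n. w j * ((\<Sum>i<n. a j i * v i) - lam * v j))"
      by (simp add: sum_distrib_left sum_subtractf algebra_simps)
    also have "\<dots> = nsq n w" unfolding nsq_def w_def by (simp add: power2_eq_square)
    finally show ?thesis .
  qed
  have "\<forall>t. 0 \<le> 2 * t * nsq n w + t^2 * (bf n a w w - lam * nsq n w)"
  proof
    fix t
    have "lam * nsq n (\<lambda>i. v i + t * w i) \<le> bf n a (\<lambda>i. v i + t * w i) (\<lambda>i. v i + t * w i)"
      by (rule ray)
    then have "lam * (1 + 2 * t * (\<Sum>i<n. v i * w i) + t^2 * nsq n w) \<le> lam + 2 * t * bf n a v w + t^2 * bf n a w w"
      unfolding bf_expand nsq_expand nv bf_sym[OF sym, of w v] lam_def by simp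
    then show "0 \<le> 2 * t * nsq n w + t^2 * (bf n a w w - lam * nsq n w)"
      using key by (simp add: algebra_simps)
  qed
  then have "nsq n w = 0" using quad_zero nsq_nonneg by blast
  then have "\<forall>i<n. (\<Sum>j<n. a i j * v j) = lam * v i"
    using nsq_zero unfolding w_def by fastforce
  then show ?thesis using nv ray by blast
qed


definition Dg :: "(nat \<Rightarrow> nat \<Rightarrow> bool) \<Rightarrow> nat set \<Rightarrow> nat" where
  "Dg E S = (\<Sum>u\<in>S. card {w\<in>S. E u w})"

definition gpath :: "(nat \<Rightarrow> nat \<Rightarrow> bool) \<Rightarrow> nat set \<Rightarrow> nat list \<Rightarrow> bool" where
  "gpath E S xs \<longleftrightarrow> distinct xs \<and> set xs \<subseteq> S \<and> successively E xs"

lemma Dg_remove: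
  assumes fin: "finite S" and u: "u \<in> S" and sym: "\<forall>x y. E x y \<longrightarrow> E y x" and irr: "\<forall>x. \<not> E x x"
  shows "Dg E S = Dg E (S - {u}) + 2 * card {w\<in>S. E u w}"
proof -
  have "Dg E S = card {w\<in>S. E u w} + (\<Sum>x\<in>S - {u}. card {w\<in>S. E x w})"
    unfolding Dg_def using fin u by (simp add: sum.remove)
  also have "(\<Sum>x\<in>S - {u}. card {w\<in>S. E x w}) = (\<Sum>x\<in>S - {u}. card {w\<in>S - {u}. E x w} + (if E x u then 1 else 0))"
  proof (rule sum.cong[OF refl])
    fix x assume x: "x \<in> S - {u}"
    show "card {w\<in>S. E x w} = card {w\<in>S - {u}. E x w} + (if E x u then 1 else 0)"
    proof (cases "E x u")
      case True
      then have "{w\<in>S. E x w} = insert u {w\<in>S - {u}. E x w}" using u by auto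
      then show ?thesis using True fin by simp
    next
      case False
      then have "{w\<in>S. E x w} = {w\<in>S - {u}. E x w}" by auto
      then show ?thesis using False by simp
    qed
  qed
  also have "\<dots> = Dg E (S - {u}) + card {x\<in>S - {u}. E x u}"
    unfolding Dg_def using fin apply (simp add: sum.distrib sum.If_cases)
    by (rule arg_cong[where f=card]) auto
  also have "{x\<in>S - {u}. E x u} = {w\<in>S. E u w}" using sym irr by auto
  finally show ?thesis by simp
qed

lemma rotate_succ:
  assumes "successively E c" "c \<noteq> []" "E (last c) (hd c)" "s < length c"
  shows "successively E (rotate s c) \<and> hd (rotate s c) = c ! s"
proof (cases "s = 0")
  case True
  then show ?thesis using assms by (simp add: hd_conv_nth)
next
  case False
  have r: "rotate s c = drop s c @ take s c" using assms(4) by (simp add: rotate_drop_take)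
  have "successively E (take s c @ drop s c)" using assms(1) by simp
  then have st: "successively E (take s c)" and sd: "successively E (drop s c)"
    unfolding successively_append_iff by auto
  have l: "last (drop s c) = last c" using assms(4) by simp
  have h: "hd (take s c) = hd c" using False assms(2) by simp
  have "successively E (drop s c @ take s c)"
    unfolding successively_append_iff using st sd l h assms(3) by auto
  moreover have "hd (drop s c @ take s c) = c ! s" using assms(4) by (simp add: hd_drop_conv_nth)
  ultimately show ?thesis using r by simp
qed

lemma erdos_gallai:
  assumes fin: "finite S" and sym: "\<forall>x y. E x y \<longrightarrow> E y x" and irr: "\<forall>x. \<not> E x x"
    and k: "k \<ge> 2" and nop: "\<forall>xs. gpath E S xs \<longrightarrow> length xs < k"
  shows "Dg E S \<le> (k - 2) * card S"
  using fin nop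
proof (induction "card S" arbitrary: S rule: less_induct)
  case less
  note fin = less.prems(1) and nop = less.prems(2)
  show ?case
  proof (cases "S = {}")
    case True
    then show ?thesis by (simp add: Dg_def)
  next
    case False
    then obtain u where u: "u \<in> S" by auto
    have bnd: "length xs \<le> card S" if "gpath E S xs" for xs
      using that fin unfolding gpath_def by (metis card_mono distinct_card)
    have p1: "gpath E S [u]" using u by (auto simp: gpath_def)
    have p2: "\<forall>ys. gpath E S ys \<longrightarrow> length ys < Suc (card S)"
      using bnd by (simp add: less_Suc_eq_le)
    have "\<exists>xs. gpath E S xs \<and> (\<forall>ys. gpath E S ys \<longrightarrow> length ys \<le> length xs)"
      by (rule ex_has_greatest_nat[OF p1 p2])
    then obtain xs where px: "gpath E S xs" and maxp: "\<And>ys. gpath E S ys \<Longrightarrow> length ys \<le> length xs"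
      by blast
    define L where "L = length xs"
    have Lpos: "L \<ge> 1" unfolding L_def using maxp[of "[u]"] u by (simp add: gpath_def)
    have Lk: "L < k" unfolding L_def using nop px by blast
    have dx: "distinct xs" and sx: "set xs \<subseteq> S" and suc: "successively E xs"
      using px unfolding gpath_def by auto
    define x0 where "x0 = xs ! 0"
    define xl where "xl = xs ! (L - 1)"
    have x0S: "x0 \<in> S" and xlS: "xl \<in> S" unfolding x0_def xl_def L_def using sx Lpos L_def
      by (auto intro!: subsetD[OF sx] nth_mem)
    have xne: "xs \<noteq> []" using Lpos L_def by auto
    have hdx: "hd xs = x0" and lastx: "last xs = xl"
      unfolding x0_def xl_def L_def using hd_conv_nth[OF xne] last_conv_nth[OF xne] by auto
    have M0: "w \<in> set xs" if "w \<in> S" "E x0 w" for w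
    proof (rule ccontr)
      assume "w \<notin> set xs"
      then have "gpath E S (w # xs)" using px that sym hdx Lpos L_def
        by (cases xs) (auto simp: gpath_def successively_Cons)
      then show False using maxp by fastforce
    qed
    have M1: "w \<in> set xs" if "w \<in> S" "E xl w" for w
    proof (rule ccontr)
      assume "w \<notin> set xs"
      then have "gpath E S (xs @ [w])" using px that lastx Lpos L_def
        by (auto simp: gpath_def successively_append_iff)
      then show False using maxp by fastforce
    qed
    show ?thesis
    proof (cases "2 * card {w\<in>S. E x0 w} \<le> k - 2 \<or> 2 * card {w\<in>S. E xl w} \<le> k - 2")
      case True
      then obtain z where z: "z \<in> S" "2 * card {w\<in>S. E z w} \<le> k - 2" using x0S xlS by blast
      have "Dg E (S - {z}) \<le> (k - 2) * card (S - {z})"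
      proof (rule less.hyps)
        have "card S > 0" using z fin card_gt_0_iff by blast
        then show "card (S - {z}) < card S" using z fin by simp
        show "finite (S - {z})" using fin by simp
        show "\<forall>xs. gpath E (S - {z}) xs \<longrightarrow> length xs < k" using nop unfolding gpath_def by blast
      qed
      moreover have "Dg E S = Dg E (S - {z}) + 2 * card {w\<in>S. E z w}"
        by (rule Dg_remove[OF fin z(1) sym irr])
      moreover have "card (S - {z}) + 1 = card S" using z fin
        by (metis One_nat_def Suc_pred card_Diff_singleton card_gt_0_iff empty_iff Suc_eq_plus1)
      ultimately have "Dg E S \<le> (k - 2) * card (S - {z}) + (k - 2)" using z by linarith
      also have "\<dots> = (k - 2) * card S" using \<open>card (S - {z}) + 1 = card S\<close>
        by (metis add.commute mult.commute mult_Suc_right plus_1_eq_Suc)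
      finally show ?thesis .
    next
      case False
      define I0 where "I0 = {i. i < L - 1 \<and> E x0 (xs ! (i+1))}"
      define I1 where "I1 = {i. i < L - 1 \<and> E (xs ! i) xl}"
      have N0: "{w\<in>S. E x0 w} = (\<lambda>i. xs ! (i+1)) ` I0"
      proof
        show "{w \<in> S. E x0 w} \<subseteq> (\<lambda>i. xs ! (i + 1)) ` I0"
        proof
          fix w assume w: "w \<in> {w \<in> S. E x0 w}"
          then have "w \<in> set xs" using M0 by auto
          then obtain j where j: "j < L" "xs ! j = w" unfolding L_def by (auto simp: in_set_conv_nth)
          have "j \<noteq> 0"
          proof
            assume "j = 0" then show False using j w irr unfolding x0_def by auto
          qed
          then show "w \<in> (\<lambda>i. xs ! (i + 1)) ` I0"
            using j w unfolding I0_def by (intro image_eqI[of _ _ "j - 1"]) auto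
        qed
        show "(\<lambda>i. xs ! (i + 1)) ` I0 \<subseteq> {w \<in> S. E x0 w}"
          unfolding I0_def L_def using sx by (auto intro!: subsetD[OF sx] nth_mem)
      qed
      have N1: "{w\<in>S. E xl w} = (\<lambda>i. xs ! i) ` I1"
      proof
        show "{w \<in> S. E xl w} \<subseteq> (\<lambda>i. xs ! i) ` I1"
        proof
          fix w assume w: "w \<in> {w \<in> S. E xl w}"
          then have "w \<in> set xs" using M1 by auto
          then obtain j where j: "j < L" "xs ! j = w" unfolding L_def by (auto simp: in_set_conv_nth)
          have "j \<noteq> L - 1"
          proof
            assume "j = L - 1" then show False using j w irr unfolding xl_def by auto
          qed
          then show "w \<in> (\<lambda>i. xs ! i) ` I1"
            using j w sym unfolding I1_def by (intro image_eqI[of _ _ j]) auto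
        qed
        show "(\<lambda>i. xs ! i) ` I1 \<subseteq> {w \<in> S. E xl w}"
          unfolding I1_def L_def using sx sym by (auto intro!: subsetD[OF sx] nth_mem)
      qed
      have c0: "card {w\<in>S. E x0 w} = card I0" unfolding N0
        by (rule card_image) (auto simp: inj_on_def I0_def L_def nth_eq_iff_index_eq[OF dx])
      have c1: "card {w\<in>S. E xl w} = card I1" unfolding N1
        by (rule card_image) (auto simp: inj_on_def I1_def L_def nth_eq_iff_index_eq[OF dx])
      have "I0 \<inter> I1 \<noteq> {}"
      proof
        assume disj: "I0 \<inter> I1 = {}"
        have "card I0 + card I1 = card (I0 \<union> I1)"
          using disj by (intro card_Un_disjoint[symmetric]) (auto simp: I0_def I1_def)
        also have "\<dots> \<le> card {..<L - 1}" by (intro card_mono) (auto simp: I0_def I1_def)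
        finally have "card I0 + card I1 \<le> L - 1" by simp
        then show False using False c0 c1 Lk Lpos by linarith
      qed
      then obtain i where i: "i < L - 1" "E x0 (xs ! (i+1))" "E (xs ! i) xl"
        unfolding I0_def I1_def by auto
      define c where "c = take (i+1) xs @ rev (drop (i+1) xs)"
      have setc: "set c = set xs"
      proof -
        have "set c = set (take (i+1) xs) \<union> set (drop (i+1) xs)" unfolding c_def by simp
        also have "\<dots> = set xs" by (metis set_append append_take_drop_id)
        finally show ?thesis .
      qed
      have dc: "distinct c" unfolding c_def using dx
        by (metis distinct_append distinct_rev append_take_drop_id set_rev)
      have lc: "length c = L" unfolding c_def L_def using i L_def by simp
      have sxs: "successively E (take (i+1) xs @ drop (i+1) xs)" using suc by simp
      then have st: "successively E (take (i+1) xs)" and sd: "successively E (drop (i+1) xs)"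
        unfolding successively_append_iff by auto
      have sdr: "successively E (rev (drop (i+1) xs))"
        unfolding successively_rev by (rule successively_mono[OF sd]) (use sym in auto)
      have lt: "last (take (i+1) xs) = xs ! i" using i L_def
        by (simp add: take_Suc_conv_app_nth)
      have hr: "hd (rev (drop (i+1) xs)) = xl" using i L_def lastx
        by (simp add: hd_rev)
      have sc: "successively E c" unfolding c_def successively_append_iff
        using st sdr lt hr i by auto
      have cne: "c \<noteq> []" using lc Lpos by auto
      have lastc: "last c = xs ! (i+1)" unfolding c_def using i L_def
        by (simp add: last_rev hd_drop_conv_nth)
      have hdc: "hd c = x0" unfolding c_def x0_def using xne by (cases xs) auto
      have cyc: "E (last c) (hd c)" using lastc hdc i sym by auto
      have closed: "w \<in> set xs" if "u \<in> set xs" "w \<in> S" "E u w" for u w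
      proof (rule ccontr)
        assume wn: "w \<notin> set xs"
        have "u \<in> set c" using that(1) setc by simp
        then obtain s where s: "s < length c" "c ! s = u" by (auto simp: in_set_conv_nth)
        have rs: "successively E (rotate s c)" "hd (rotate s c) = u"
          using rotate_succ[OF sc cne cyc s(1)] s by auto
        have rne: "rotate s c \<noteq> []" using cne by simp
        obtain y ys where yys: "rotate s c = y # ys" using rne by (cases "rotate s c") auto
        have "y = u" using rs(2) yys by simp
        have "successively E (w # rotate s c)" unfolding yys
          using rs(1) yys \<open>y = u\<close> sym that(3) by (simp add: successively_Cons)
        moreover have "distinct (w # rotate s c)" using wn setc dc by simp
        moreover have "set (w # rotate s c) \<subseteq> S" using setc sx that(2) by simp
        ultimately have "gpath E S (w # rotate s c)" unfolding gpath_def by blast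
        then have "length (w # rotate s c) \<le> L" using maxp unfolding L_def by blast
        then show False using lc by simp
      qed
      define P where "P = set xs"
      have PS: "P \<subseteq> S" unfolding P_def by (rule sx)
      have finP: "finite P" unfolding P_def by simp
      have cP: "card P = L" unfolding P_def L_def using dx by (simp add: distinct_card)
      have "Dg E S = (\<Sum>u\<in>P. card {w\<in>S. E u w}) + (\<Sum>u\<in>S - P. card {w\<in>S. E u w})"
        unfolding Dg_def using sum.subset_diff[OF PS fin] by (simp add: add.commute)
      also have "(\<Sum>u\<in>P. card {w\<in>S. E u w}) = (\<Sum>u\<in>P. card {w\<in>P. E u w})"
      proof (rule sum.cong[OF refl])
        fix u assume "u \<in> P"
        then have "{w\<in>S. E u w} = {w\<in>P. E u w}" using closed PS unfolding P_def by blast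
        then show "card {w\<in>S. E u w} = card {w\<in>P. E u w}" by simp
      qed
      also have "(\<Sum>u\<in>S - P. card {w\<in>S. E u w}) = Dg E (S - P)"
        unfolding Dg_def
      proof (rule sum.cong[OF refl])
        fix u assume u: "u \<in> S - P"
        have "{w\<in>S. E u w} = {w\<in>S - P. E u w}"
        proof (intro equalityI subsetI)
          fix w assume w: "w \<in> {w\<in>S. E u w}"
          have "w \<notin> P"
          proof
            assume "w \<in> P"
            then have "u \<in> set xs" using closed[of w u] w u sym unfolding P_def by blast
            then show False using u unfolding P_def by blast
          qed
          then show "w \<in> {w\<in>S - P. E u w}" using w by blast
        qed blast
        then show "card {w\<in>S. E u w} = card {w\<in>S - P. E u w}" by simp
      qed
      also have "(\<Sum>u\<in>P. card {w\<in>P. E u w}) \<le> (\<Sum>u\<in>P. k - 2)"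
      proof (rule sum_mono)
        fix u assume u: "u \<in> P"
        have "card {w\<in>P. E u w} \<le> card (P - {u})" using finP irr by (intro card_mono) auto
        also have "\<dots> = L - 1" using cP u finP by simp
        finally show "card {w\<in>P. E u w} \<le> k - 2" using Lk by linarith
      qed
      also have "Dg E (S - P) \<le> (k - 2) * card (S - P)"
      proof (rule less.hyps)
        have "card (S - P) = card S - card P" by (rule card_Diff_subset[OF finP PS])
        moreover have "card P \<le> card S" by (rule card_mono[OF fin PS])
        ultimately show "card (S - P) < card S" using Lpos cP by linarith
        show "finite (S - P)" using fin by simp
        show "\<forall>xs. gpath E (S - P) xs \<longrightarrow> length xs < k" using nop unfolding gpath_def by blast
      qed
      finally have "Dg E S \<le> (k - 2) * card P + (k - 2) * card (S - P)" by (simp add: mult.commute)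
      also have "\<dots> = (k - 2) * card S"
        using PS fin finP by (simp add: card_Diff_subset add_mult_distrib2[symmetric] card_mono)
      finally show ?thesis .
    qed
  qed
qed


lemma final_alg:
  fixes mu lam M T K n :: real
  assumes "mu \<le> lam" "lam * n \<ge> M" "lam^2 \<le> M" "T - mu * M \<ge> lam^2 * (lam - mu)"
    "T \<le> K * M" "K \<ge> 0" "n > 0" "M \<ge> 0"
  shows "mu \<le> 2 * K - M^2 / n^3"
proof (cases "M = 0")
  case True
  then have "lam^2 \<le> 0" using assms by simp
  then have "lam = 0" by (simp add: power2_eq_square) (smt (verit) zero_le_square mult_eq_0_iff)
  then show ?thesis using True assms by simp
next
  case False
  then have Mp: "M > 0" using assms by simp
  have lp: "lam \<ge> M / n" using assms by (simp add: field_simps)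
  then have lpos: "lam > 0" using Mp assms(7) by (smt (verit) divide_pos_pos)
  have I: "lam^2 * (lam - K) \<le> (M - lam^2) * (K - mu)"
    using assms(4,5) by (simp add: algebra_simps power2_eq_square)
  have main: "mu * M \<le> 2 * K * M - lam^3"
  proof (cases "mu \<ge> K")
    case True
    have "(M - lam^2) * (K - mu) \<le> 0"
      using True assms(3) by (simp add: mult_nonneg_nonpos)
    then have "lam^2 * (lam - K) \<le> 0" using I by linarith
    then have lK: "lam \<le> K" using lpos
      by (smt (verit) mult_pos_pos zero_less_power)
    have "mu * M \<le> lam * M" using assms(1) Mp by (simp add: mult_right_mono)
    also have "\<dots> \<le> K * M" using lK Mp by (simp add: mult_right_mono)
    finally have a: "mu * M \<le> K * M" .
    have "lam^3 = lam * lam^2" by (simp add: power3_eq_cube power2_eq_square)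
    also have "\<dots> \<le> K * lam^2" using lK by (simp add: mult_right_mono)
    also have "\<dots> \<le> K * M" using assms(3,6) by (simp add: mult_left_mono)
    finally show ?thesis using a by linarith
  next
    case False
    have "(M - lam^2) * (K - mu) \<le> M * (K - mu)"
      using False lpos by (simp add: mult_right_mono)
    then have "lam^2 * (lam - K) \<le> M * (K - mu)" using I by linarith
    moreover have "K * lam^2 \<le> K * M" using assms(3,6) by (simp add: mult_left_mono)
    ultimately show ?thesis by (simp add: algebra_simps power3_eq_cube power2_eq_square)
  qed
  have "(M / n)^3 \<le> lam^3" using lp Mp assms(7) by (intro power_mono) auto
  then have "M^3 / n^3 \<le> lam^3" by (simp add: power_divide)
  then have "M^2 / n^3 \<le> lam^3 / M" using Mp assms(7)
    by (simp add: field_simps power3_eq_cube power2_eq_square)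
  moreover have "mu \<le> 2 * K - lam^3 / M" using main Mp by (simp add: field_simps)
  ultimately show ?thesis by linarith
qed

lemma eig_finite:
  fixes A :: "real mat"
  assumes A: "A \<in> carrier_mat n n"
  shows "finite {k. eigenvalue A k}"
proof -
  have "char_poly A \<noteq> 0" using degree_monic_char_poly[OF A] by auto
  then have "finite {k. poly (char_poly A) k = 0}" by (rule poly_roots_finite)
  then show ?thesis using eigenvalue_root_char_poly[OF A] by simp
qed

lemma eigen_from:
  fixes A :: "real mat"
  assumes A: "A \<in> carrier_mat n n" and Aa: "\<And>i j. i < n \<Longrightarrow> j < n \<Longrightarrow> A $$ (i,j) = a i j"
    and nv: "nsq n v = 1" and ev: "\<forall>i<n. (\<Sum>j<n. a i j * v j) = lam * v i"
  shows "eigenvalue A lam"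
proof -
  let ?w = "vec n v"
  have nz: "?w \<noteq> 0\<^sub>v n"
  proof
    assume "?w = 0\<^sub>v n"
    then have "\<forall>i<n. v i = 0" by (metis index_vec index_zero_vec(1))
    then have "nsq n v = 0" unfolding nsq_def by simp
    with nv show False by simp
  qed
  have eq: "A *\<^sub>v ?w = lam \<cdot>\<^sub>v ?w"
  proof (rule eq_vecI)
    fix i assume i: "i < dim_vec (lam \<cdot>\<^sub>v ?w)"
    then have i': "i < n" by simp
    have "(A *\<^sub>v ?w) $ i = scalar_prod (row A i) ?w" using i' A by simp
    also have "\<dots> = (\<Sum>j<n. a i j * v j)" unfolding scalar_prod_def
      using i' A Aa by (auto intro!: sum.cong simp: atLeast0LessThan)
    also have "\<dots> = (lam \<cdot>\<^sub>v ?w) $ i" using ev i' by simp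
    finally show "(A *\<^sub>v ?w) $ i = (lam \<cdot>\<^sub>v ?w) $ i" .
  next
    show "dim_vec (A *\<^sub>v ?w) = dim_vec (lam \<cdot>\<^sub>v ?w)" using A by simp
  qed
  show ?thesis unfolding eigenvalue_def eigenvector_def
    using A nz eq by (intro exI[of _ ?w]) auto
qed

definition adjr :: "nat \<Rightarrow> (nat \<Rightarrow> nat \<Rightarrow> bool) \<Rightarrow> nat \<Rightarrow> nat \<Rightarrow> bool" where
  "adjr n E i j \<longleftrightarrow> i < n \<and> j < n \<and> E i j"

lemma no_long_path:
  assumes sg: "simple_graph n E" and nc: "\<not> has_cycle n E r" and r: "r \<ge> 3" and j: "j < n"
    and p: "gpath (adjr n E) {i. adjr n E j i} xs"
  shows "length xs < r - 1"
proof (rule ccontr)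
  assume "\<not> length xs < r - 1"
  then have lx: "length xs \<ge> r - 1" by simp
  let ?E = "adjr n E"
  have symE: "\<And>x y. ?E x y \<Longrightarrow> ?E y x" using sg unfolding simple_graph_def adjr_def by blast
  have irrE: "\<And>x. \<not> ?E x x" using sg unfolding simple_graph_def adjr_def by blast
  define ys where "ys = take (r - 1) xs"
  have ly: "length ys = r - 1" unfolding ys_def using lx by simp
  have dy: "distinct ys" unfolding ys_def using p by (simp add: gpath_def)
  have sy: "set ys \<subseteq> {i. ?E j i}" unfolding ys_def using p unfolding gpath_def
    by (meson order_trans set_take_subset)
  have "successively ?E (take (r - 1) xs @ drop (r - 1) xs)" using p by (simp add: gpath_def)
  then have suy: "successively ?E ys" unfolding ys_def successively_append_iff by blast
  define zs where "zs = j # ys"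
  have lz: "length zs = r" unfolding zs_def using ly r by simp
  have jn: "j \<notin> set ys" using sy irrE by blast
  have dz: "distinct zs" unfolding zs_def using dy jn by simp
  have yne: "ys \<noteq> []" using ly r by auto
  have "?E j (hd ys)" using sy yne by (metis hd_in_set mem_Collect_eq subsetD)
  then have suz: "successively ?E zs" unfolding zs_def using suy yne
    by (cases ys) (auto simp: successively_Cons)
  have zn: "\<And>i. i < r \<Longrightarrow> zs ! i < n"
  proof -
    fix i assume "i < r"
    then have "zs ! i \<in> set zs" using lz by simp
    then show "zs ! i < n" unfolding zs_def using sy j unfolding adjr_def by auto
  qed
  have "has_cycle n E r"
    unfolding has_cycle_def
  proof (intro conjI exI[of _ "\<lambda>i. zs ! i"] allI impI)
    show "3 \<le> r" by (rule r)
    show "inj_on (\<lambda>i. zs ! i) {0..<r}" unfolding inj_on_def using dz lz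
      by (simp add: nth_eq_iff_index_eq)
    show "zs ! i < n" if "i < r" for i using zn that .
    show "E (zs ! i) (zs ! ((i + 1) mod r))" if i: "i < r" for i
    proof (cases "i + 1 < r")
      case True
      then have "?E (zs ! i) (zs ! Suc i)" using successively_nth[OF suz, of i] lz by simp
      then show ?thesis using True unfolding adjr_def by simp
    next
      case False
      then have ir: "i = r - 1" using i by simp
      then have m: "(i + 1) mod r = 0" using r by simp
      have "zs ! i = ys ! (r - 2)" unfolding zs_def using ir r by (simp add: nth_Cons' numeral_2_eq_2)
      moreover have "ys ! (r - 2) \<in> set ys" using ly r by simp
      ultimately have "?E j (zs ! i)" using sy by auto
      then have "?E (zs ! i) j" by (rule symE)
      then show ?thesis using m unfolding zs_def adjr_def by simp
    qed
  qed
  then show False using nc by simp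
qed

lemma edges_count:
  assumes sg: "simple_graph n E"
  shows "card {(i, j). adjr n E i j} = 2 * num_edges n E"
proof -
  let ?E = "adjr n E"
  have symE: "\<And>x y. ?E x y \<Longrightarrow> ?E y x" using sg unfolding simple_graph_def adjr_def by blast
  have irrE: "\<And>x. \<not> ?E x x" using sg unfolding simple_graph_def adjr_def by blast
  define PP where "PP = {(i, j). ?E i j}"
  define P1 where "P1 = {(i, j). ?E i j \<and> i < j}"
  define P2 where "P2 = {(i, j). ?E i j \<and> j < i}"
  have finPP: "finite PP"
    by (rule finite_subset[of _ "{..<n} \<times> {..<n}"]) (auto simp: PP_def adjr_def)
  have PPu: "PP = P1 \<union> P2" unfolding PP_def P1_def P2_def using irrE by auto (metis linorder_neqE_nat)
  have fin1: "finite P1" and fin2: "finite P2" using finPP PPu by auto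
  have disj: "P1 \<inter> P2 = {}" unfolding P1_def P2_def by auto
  have P2img: "P2 = (\<lambda>(i, j). (j, i)) ` P1"
    unfolding P1_def P2_def using symE by (auto simp: image_iff)
  have "card P2 = card P1" unfolding P2img by (rule card_image) (auto simp: inj_on_def)
  then have c: "card PP = 2 * card P1" using PPu disj fin1 fin2 by (simp add: card_Un_disjoint)
  have edg: "edges n E = (\<lambda>(i, j). {i, j}) ` P1"
  proof
    show "edges n E \<subseteq> (\<lambda>(i, j). {i, j}) ` P1"
    proof
      fix e assume "e \<in> edges n E"
      then obtain i j where e: "e = {i, j}" "i < n" "j < n" "E i j" unfolding edges_def by blast
      then have Eij: "?E i j" unfolding adjr_def by simp
      then have "i \<noteq> j" using irrE by auto
      then show "e \<in> (\<lambda>(i, j). {i, j}) ` P1"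
      proof (cases "i < j")
        case True
        then show ?thesis using e Eij unfolding P1_def by (auto simp: image_iff)
      next
        case False
        then have "j < i" using \<open>i \<noteq> j\<close> by simp
        moreover have "?E j i" using symE Eij by blast
        ultimately have "(j, i) \<in> P1" unfolding P1_def by simp
        moreover have "e = {j, i}" using e by auto
        ultimately show ?thesis by force
      qed
    qed
    show "(\<lambda>(i, j). {i, j}) ` P1 \<subseteq> edges n E"
      unfolding P1_def edges_def adjr_def by auto
  qed
  have "inj_on (\<lambda>(i, j). {i, j}) P1"
    unfolding inj_on_def P1_def by (auto simp: doubleton_eq_iff)
  then have "num_edges n E = card P1" unfolding num_edges_def edg by (rule card_image)
  then show ?thesis using c unfolding PP_def by simp
qed

lemma bf_neg: "bf n (\<lambda>i j. - a i j) x y = - bf n a x y"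
  unfolding bf_def by (simp add: sum_negf)

theorem corollary5:
  fixes n r :: nat and E :: "nat \<Rightarrow> nat \<Rightarrow> bool"
  assumes "simple_graph n E"
    and "3 \<le> r" and "real r \<le> real n / 2"
    and "\<not> has_cycle n E r"
  shows "smallest_eigenvalue (adj_matrix n E)
           \<le> - 4 * (real (num_edges n E))^2 / (real n)^3 + 2 * (real r - 3)"
proof -
  note sg = assms(1)
  define E' where "E' = adjr n E"
  have symE: "\<forall>x y. E' x y \<longrightarrow> E' y x" using sg unfolding simple_graph_def adjr_def E'_def by blast
  have irrE: "\<forall>x. \<not> E' x x" using sg unfolding simple_graph_def adjr_def E'_def by blast
  define a :: "nat \<Rightarrow> nat \<Rightarrow> real" where "a = (\<lambda>i j. of_bool (E' i j))"
  have syma: "\<forall>i<n. \<forall>j<n. a i j = a j i" unfolding a_def using symE by auto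
  have n0: "n > 0" using assms(2,3) by simp
  define A where "A = adj_matrix n E"
  have Acar: "A \<in> carrier_mat n n" unfolding A_def adj_matrix_def by simp
  have Aa: "\<And>i j. i < n \<Longrightarrow> j < n \<Longrightarrow> A $$ (i,j) = a i j"
    unfolding A_def adj_matrix_def a_def E'_def adjr_def by simp
  have fin: "finite {k. eigenvalue A k}" by (rule eig_finite[OF Acar])
  obtain v0 lam0 where v0: "nsq n v0 = 1" "\<forall>i<n. (\<Sum>j<n. a i j * v0 j) = lam0 * v0 i"
      and ray0: "\<forall>x. bf n a x x \<ge> lam0 * nsq n x"
    using rayleigh_min[OF syma n0] by blast
  have "eigenvalue A lam0" by (rule eigen_from[OF Acar Aa v0])
  define mu where "mu = smallest_eigenvalue A"
  have mule: "mu \<le> lam0" unfolding mu_def smallest_eigenvalue_def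
    using fin \<open>eigenvalue A lam0\<close> by (intro Min_le) auto
  have ray: "bf n a x x \<ge> mu * nsq n x" for x
  proof -
    have "mu * nsq n x \<le> lam0 * nsq n x" using mule nsq_nonneg by (rule mult_right_mono)
    then show ?thesis using ray0 by (meson order_trans)
  qed
  have symna: "\<forall>i<n. \<forall>j<n. - a i j = - a j i" using syma by simp
  obtain v lam' where v: "nsq n v = 1" "\<forall>i<n. (\<Sum>j<n. - a i j * v j) = lam' * v i"
      and rayn: "\<forall>x. bf n (\<lambda>i j. - a i j) x x \<ge> lam' * nsq n x"
    using rayleigh_min[OF symna n0] by blast
  define lam where "lam = - lam'"
  have ev: "\<forall>i<n. (\<Sum>j<n. a i j * v j) = lam * v i"
  proof (intro allI impI)
    fix i assume "i < n"
    then have "(\<Sum>j<n. - a i j * v j) = lam' * v i" using v by blast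
    then show "(\<Sum>j<n. a i j * v j) = lam * v i" unfolding lam_def by (simp add: sum_negf)
  qed
  have top: "bf n a x x \<le> lam * nsq n x" for x
    using rayn[rule_format, of x] unfolding bf_neg lam_def by simp
  have ev': "(\<Sum>i<n. a i j * v i) = lam * v j" if "j < n" for j
  proof -
    have "(\<Sum>i<n. a i j * v i) = (\<Sum>i<n. a j i * v i)" using syma that by (intro sum.cong) auto
    then show ?thesis using ev that by simp
  qed
  have bfvv: "bf n a v v = lam"
  proof -
    have "bf n a v v = (\<Sum>i<n. v i * (lam * v i))" unfolding bf_alt2 using ev by simp
    also have "\<dots> = lam * nsq n v" unfolding nsq_def by (simp add: sum_distrib_left power2_eq_square algebra_simps)
    finally show ?thesis using v by simp
  qed
  have bfvy: "bf n a v y = lam * (\<Sum>j<n. v j * y j)" for y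
  proof -
    have "bf n a v y = (\<Sum>j<n. y j * (lam * v j))" unfolding bf_alt using ev' by simp
    then show ?thesis by (simp add: sum_distrib_left algebra_simps)
  qed
  have v1: "(\<Sum>j<n. v j * v j) = 1" using v(1) unfolding nsq_def by (simp add: power2_eq_square)
  have Qy: "bf n a y y - mu * nsq n y \<ge> (\<Sum>i<n. v i * y i)^2 * (lam - mu)" for y
  proof -
    define c where "c = (\<Sum>i<n. v i * y i)"
    have "mu * nsq n (\<lambda>i. y i + (- c) * v i) \<le> bf n a (\<lambda>i. y i + (- c) * v i) (\<lambda>i. y i + (- c) * v i)"
      by (rule ray)
    moreover have "bf n a (\<lambda>i. y i + (- c) * v i) (\<lambda>i. y i + (- c) * v i) = bf n a y y - 2 * c * (lam * c) + c^2 * lam"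
      unfolding bf_expand bf_sym[OF syma, of y v] bfvy bfvv c_def using v1 by (simp add: power2_eq_square)
    moreover have "nsq n (\<lambda>i. y i + (- c) * v i) = nsq n y - 2 * c * c + c^2"
    proof -
      have "(\<Sum>i<n. y i * v i) = c" unfolding c_def by (simp add: mult.commute)
      then show ?thesis unfolding nsq_expand v by simp
    qed
    ultimately have "mu * (nsq n y - 2 * c * c + c^2) \<le> bf n a y y - 2 * c * (lam * c) + c^2 * lam" by simp
    then show ?thesis unfolding c_def[symmetric] by (simp add: algebra_simps power2_eq_square)
  qed
  have Ny: "nsq n y \<ge> (\<Sum>i<n. v i * y i)^2" for y
  proof -
    define c where "c = (\<Sum>i<n. v i * y i)"
    have "0 \<le> nsq n (\<lambda>i. y i + (- c) * v i)" by (rule nsq_nonneg)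
    also have "(\<Sum>i<n. y i * v i) = c" unfolding c_def by (simp add: mult.commute)
    then have "nsq n (\<lambda>i. y i + (- c) * v i) = nsq n y - c^2"
      unfolding nsq_expand v by (simp add: power2_eq_square)
    finally show ?thesis unfolding c_def by simp
  qed
  define col where "col = (\<lambda>j i. a i j)"
  have cj: "(\<Sum>i<n. v i * col j i) = lam * v j" if "j < n" for j
    using ev'[OF that] unfolding col_def by (simp add: mult.commute)
  define M where "M = (\<Sum>j<n. nsq n (col j))"
  define T where "T = (\<Sum>j<n. bf n a (col j) (col j))"
  have "(\<Sum>j<n. (lam * v j)^2 * (lam - mu)) \<le> (\<Sum>j<n. bf n a (col j) (col j) - mu * nsq n (col j))"
  proof (rule sum_mono)
    fix j assume "j \<in> {..<n}"
    then show "(lam * v j)^2 * (lam - mu) \<le> bf n a (col j) (col j) - mu * nsq n (col j)"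
      using Qy[of "col j"] cj[of j] by simp
  qed
  also have "(\<Sum>j<n. (lam * v j)^2 * (lam - mu)) = lam^2 * (lam - mu) * nsq n v"
    unfolding nsq_def sum_distrib_left by (intro sum.cong refl) (simp add: power_mult_distrib)
  finally have K1: "lam^2 * (lam - mu) \<le> T - mu * M"
    unfolding T_def M_def v by (simp add: sum_subtractf sum_distrib_left)
  have "(\<Sum>j<n. (lam * v j)^2) \<le> M" unfolding M_def
  proof (rule sum_mono)
    fix j assume "j \<in> {..<n}"
    then show "(lam * v j)^2 \<le> nsq n (col j)" using Ny[of "col j"] cj[of j] by simp
  qed
  also have "(\<Sum>j<n. (lam * v j)^2) = lam^2 * nsq n v"
    unfolding nsq_def by (simp add: sum_distrib_left power_mult_distrib)
  finally have K2: "lam^2 \<le> M" using v by simp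
  have mulam: "mu \<le> lam" using ray[of v] bfvv v by simp
  have Msum: "M = bf n a (\<lambda>_. 1) (\<lambda>_. 1)"
  proof -
    have sq: "(a i j)^2 = a i j" for i j unfolding a_def by (cases "E' i j") auto
    show ?thesis unfolding M_def bf_alt nsq_def col_def sq by simp
  qed
  have K3: "lam * n \<ge> M" using top[of "\<lambda>_. 1"] unfolding Msum nsq_def by (simp add: mult.commute)
  define N where "N = (\<lambda>j. {i. E' j i})"
  have NS: "N j \<subseteq> {..<n}" for j unfolding N_def E'_def adjr_def by auto
  have finN: "finite (N j)" for j using NS finite_subset by blast
  have colsq: "nsq n (col j) = real (card (N j))" if "j < n" for j
  proof -
    have "nsq n (col j) = (\<Sum>i<n. of_bool (E' j i))"
      unfolding nsq_def col_def a_def using symE by (intro sum.cong refl) (auto simp: of_bool_def)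
    also have "\<dots> = real (card ({..<n} \<inter> {i. E' j i}))" by simp
    also have "{..<n} \<inter> {i. E' j i} = N j" using NS unfolding N_def by auto
    finally show ?thesis .
  qed
  have bfcol: "bf n a (col j) (col j) = real (Dg E' (N j))" if "j < n" for j
  proof -
    have "bf n a (col j) (col j) = (\<Sum>i<n. (if i \<in> N j then real (card {k\<in>N j. E' i k}) else 0))"
      unfolding bf_def
    proof (rule sum.cong[OF refl])
      fix i assume i: "i \<in> {..<n}"
      show "(\<Sum>k<n. a i k * col j i * col j k) = (if i \<in> N j then real (card {k\<in>N j. E' i k}) else 0)"
      proof (cases "i \<in> N j")
        case True
        then have "E' i j" using symE unfolding N_def by auto
        then have "(\<Sum>k<n. a i k * col j i * col j k) = (\<Sum>k<n. of_bool (E' i k \<and> E' j k))"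
          unfolding col_def a_def using symE by (intro sum.cong refl) (auto simp: of_bool_def)
        also have "\<dots> = real (card ({..<n} \<inter> {k. E' i k \<and> E' j k}))" by simp
        also have "{..<n} \<inter> {k. E' i k \<and> E' j k} = {k\<in>N j. E' i k}" using NS unfolding N_def by auto
        finally show ?thesis using True by simp
      next
        case False
        then have "\<not> E' i j" using symE unfolding N_def by auto
        then show ?thesis using False unfolding col_def a_def by simp
      qed
    qed
    also have "\<dots> = (\<Sum>i\<in>N j. real (card {k\<in>N j. E' i k}))"
      using NS[of j] by (simp add: sum.If_cases Int_absorb1)
    also have "\<dots> = real (Dg E' (N j))" unfolding Dg_def by simp
    finally show ?thesis .
  qed
  have EGj: "Dg E' (N j) \<le> (r - 3) * card (N j)" if "j < n" for j
  proof -
    have "Dg E' (N j) \<le> (r - 1 - 2) * card (N j)"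
    proof (rule erdos_gallai[OF finN symE irrE])
      show "2 \<le> r - 1" using assms(2) by simp
      show "\<forall>xs. gpath E' (N j) xs \<longrightarrow> length xs < r - 1"
        using no_long_path[OF sg assms(4) assms(2) that] unfolding N_def E'_def by blast
    qed
    then show ?thesis by (simp add: numeral_3_eq_3)
  qed
  have K4: "T \<le> (real r - 3) * M"
  proof -
    have "T = (\<Sum>j<n. real (Dg E' (N j)))" unfolding T_def using bfcol by simp
    also have "\<dots> \<le> (\<Sum>j<n. (real r - 3) * real (card (N j)))"
    proof (rule sum_mono)
      fix j assume j: "j \<in> {..<n}"
      have "real (Dg E' (N j)) \<le> real ((r - 3) * card (N j))" using EGj[of j] j by (simp only: of_nat_le_iff lessThan_iff)
      also have "\<dots> = (real r - 3) * real (card (N j))" using assms(2) by (simp add: of_nat_diff)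
      finally show "real (Dg E' (N j)) \<le> (real r - 3) * real (card (N j))" .
    qed
    also have "\<dots> = (real r - 3) * M" unfolding M_def using colsq by (simp add: sum_distrib_left)
    finally show ?thesis .
  qed
  have Medge: "M = 2 * real (num_edges n E)"
  proof -
    have "M = (\<Sum>j<n. real (card (N j)))" unfolding M_def using colsq by simp
    also have "\<dots> = real (\<Sum>j<n. card (N j))" by simp
    also have "(\<Sum>j<n. card (N j)) = card (SIGMA j:{..<n}. N j)"
      using finN by (simp add: card_SigmaI)
    also have "(SIGMA j:{..<n}. N j) = {(i, j). adjr n E i j}"
      unfolding N_def E'_def adjr_def by auto
    also have "card \<dots> = 2 * num_edges n E" by (rule edges_count[OF sg])
    finally show ?thesis by simp
  qed
  have M0: "M \<ge> 0" unfolding M_def by (intro sum_nonneg nsq_nonneg)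
  have fa: "mu \<le> 2 * (real r - 3) - M^2 / (real n)^3"
    by (rule final_alg[OF mulam K3 K2 K1 K4]) (use assms(2) n0 M0 in auto)
  have "M^2 = 4 * (real (num_edges n E))^2" unfolding Medge by (simp add: power2_eq_square)
  then show ?thesis using fa unfolding mu_def A_def by simp
qed

end
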